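(* Let $p_1\ne p_2$ be primes and $a,b>0$ integers, and let $n=p_1^a p_2^b$. Then for every integer $k$ with $1\le k\le n-1$, $\binom{n}{k}$ is divisible by $p_1$ or by $p_2$ (i.e., $n$ satisfies Condition 1 with $p_1$ and $p_2$).
   Context: A positive integer $n$ satisfies Condition 1 with primes $p$ and $q$ if for all integers $k$ with $1\le k\le n-1$ the binomial coefficient $\binom{n}{k}$ is divisible by at least one of $p$ or $q$. *)

theory Defs
  imports "HOL-Computational_Algebra.Primes"
begin

definition condition1 :: "nat \<Rightarrow> nat \<Rightarrow> nat \<Rightarrow> bool" where
  "condition1 n p q \<longleftrightarrow> (\<forall>k::nat. 1 \<le> k \<and> k \<le> n - 1 \<longrightarrow> p dvd (n choose k) \<or> q dvd (n choose k))"

end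

theory Submission
  imports Defs
begin

lemma key:
  fixes p a n k :: nat
  assumes "prime p" "p ^ a dvd n" "\<not> p dvd (n choose k)" "0 < k"
  shows "p ^ a dvd k"
proof -
  have "k * (n choose k) = n * ((n - 1) choose (k - 1))"
    using assms(4) by (rule times_binomial_minus1_eq)
  hence "p ^ a dvd k * (n choose k)" using assms(2) by (metis dvd_mult2)
  moreover have "coprime (p ^ a) (n choose k)"
    using assms(1,3) by (simp add: prime_imp_coprime coprime_power_left_iff)
  ultimately show ?thesis using coprime_dvd_mult_left_iff by blast
qed

theorem mainTheorem4:
  fixes p1 p2 a b n :: nat
  assumes "prime p1" and "prime p2" and "p1 \<noteq> p2"
    and "a > 0" and "b > 0"
    and "n = p1 ^ a * p2 ^ b"
  shows "condition1 n p1 p2"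
  unfolding condition1_def
proof (intro allI impI)
  fix k :: nat
  assume k: "1 \<le> k \<and> k \<le> n - 1"
  show "p1 dvd (n choose k) \<or> p2 dvd (n choose k)"
  proof (rule ccontr)
    assume h: "\<not> (p1 dvd (n choose k) \<or> p2 dvd (n choose k))"
    have n0: "n > 0" using assms prime_gt_0_nat by simp
    have d1: "p1 ^ a dvd k" using key[of p1 a n k] h k assms(1,6) by simp
    have d2: "p2 ^ b dvd k" using key[of p2 b n k] h k assms(2,6) by simp
    have "coprime (p1 ^ a) (p2 ^ b)"
      using assms(1,2,3) by (simp add: primes_coprime coprime_power_left_iff coprime_power_right_iff)
    hence "n dvd k" using d1 d2 assms(6) by (simp add: divides_mult)
    moreover have "0 < k" "k < n" using k n0 by auto
    ultimately show False using nat_dvd_not_less by blast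
  qed
qed

end
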